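(* Let $q$ be a power of $2$. Let $b\in\mathbb{F}_q^*$ and $\delta\in\mathbb{F}_{q^2}$ with $b\,\mathrm{Tr}_{q^2/q}(\delta)^2=1$. Then the compositional inverse of $$P(x)=b(x^q+x+\delta)^{q+2}+x$$ over $\mathbb{F}_{q^2}$ is $$P^{-1}(x)=b\left(\left(\mathrm{Tr}_{q^2/q}(\delta)(x^q+x)+\delta^{q+1}\right)^{q/2}+\delta\right)^{q+2}+x.$$
   Context: $\mathrm{Tr}_{q^2/q}(y)=y+y^q$. The compositional inverse of a permutation polynomial $f$ of $\mathbb{F}_{Q}$ is the unique polynomial $f^{-1}$ (modulo $x^Q-x$) with $f(f^{-1}(c))=f^{-1}(f(c))=c$ for all $c\in\mathbb{F}_Q$; in particular the statement includes that $P$ permutes $\mathbb{F}_{q^2}$. *)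

theory Defs
  imports Main
begin

text \<open>Relative trace from F_{q^2} to F_q, where the ambient finite field has q^2 elements.\<close>
definition tr2 :: "nat \<Rightarrow> 'a::field \<Rightarrow> 'a" where
  "tr2 q y = y + y ^ q"

end

theory Submission
  imports Defs
begin

lemma fermat_aux:
  fixes x :: "'a::{field,finite}"
  assumes "x \<noteq> 0"
  shows "x ^ (card (UNIV::'a set) - 1) = 1"
proof -
  let ?S = "UNIV - {0::'a}"
  have cS: "card ?S = card (UNIV::'a set) - 1" by (simp add: card_Diff_singleton)
  have bij: "bij_betw (\<lambda>y. x * y) ?S ?S"
    unfolding bij_betw_def
  proof
    show "inj_on (\<lambda>y. x * y) ?S" using assms by (auto simp: inj_on_def)
    show "(\<lambda>y. x * y) ` ?S = ?S"
    proof
      show "(\<lambda>y. x * y) ` ?S \<subseteq> ?S" using assms by auto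
      show "?S \<subseteq> (\<lambda>y. x * y) ` ?S"
      proof
        fix z assume "z \<in> ?S"
        then have "z = x * (z / x)" "z / x \<in> ?S" using assms by auto
        then show "z \<in> (\<lambda>y. x * y) ` ?S" by blast
      qed
    qed
  qed
  have "prod (\<lambda>y. x * y) ?S = prod id ?S"
    using prod.reindex_bij_betw[OF bij, of id] by simp
  moreover have "prod (\<lambda>y. x * y) ?S = x ^ card ?S * prod id ?S"
    by (simp add: prod.distrib)
  moreover have "prod id ?S \<noteq> 0" by simp
  ultimately have "x ^ card ?S = 1" by simp
  then show ?thesis using cS by simp
qed

lemma char2_frob:
  fixes x y :: "'a::field"
  assumes "(1::'a) + 1 = 0"
  shows "(x + y) ^ (2 ^ j) = x ^ (2 ^ j) + y ^ (2 ^ j)"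
proof (induction j)
  case 0 then show ?case by simp
next
  case (Suc j)
  have two: "\<And>a b::'a. (a + b) ^ 2 = a ^ 2 + b ^ 2"
  proof -
    fix a b :: 'a
    have "(a + b) ^ 2 = a ^ 2 + b ^ 2 + (1 + 1) * (a * b)"
      by (simp add: power2_eq_square algebra_simps)
    then show "(a + b) ^ 2 = a ^ 2 + b ^ 2" using assms by simp
  qed
  have "(x + y) ^ (2 ^ Suc j) = ((x + y) ^ (2 ^ j)) ^ 2"
    by (simp add: power_mult[symmetric] mult.commute)
  also have "\<dots> = (x ^ (2 ^ j)) ^ 2 + (y ^ (2 ^ j)) ^ 2" using Suc two by simp
  also have "\<dots> = x ^ (2 ^ Suc j) + y ^ (2 ^ Suc j)"
    by (simp add: power_mult[symmetric] mult.commute)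
  finally show ?case .
qed

theorem theorem3p6:
  fixes b \<delta> :: "'a::{field, finite}" and q k :: nat
  assumes "k \<ge> 1" and "q = 2 ^ k" and "card (UNIV :: 'a set) = q ^ 2"
    and "b \<noteq> 0" and "b ^ q = b"
    and "b * (tr2 q \<delta>) ^ 2 = 1"
  defines "P \<equiv> (\<lambda>x::'a. b * (x ^ q + x + \<delta>) ^ (q + 2) + x)"
    and "Pinv \<equiv> (\<lambda>x::'a. b * ((tr2 q \<delta> * (x ^ q + x) + \<delta> ^ (q + 1)) ^ (q div 2) + \<delta>) ^ (q + 2) + x)"
  shows "bij P \<and> (\<forall>c. P (Pinv c) = c) \<and> (\<forall>c. Pinv (P c) = c)"
proof -
  have q2: "q \<ge> 2" using assms(1,2)
    by (metis one_le_numeral power_increasing power_one_right)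
  have ferm: "x ^ (q ^ 2) = x" for x :: 'a
  proof (cases "x = 0")
    case True then show ?thesis using q2 by simp
  next
    case False
    have "x ^ (q^2) = x * x ^ (q^2 - 1)" using q2
      by (metis One_nat_def Suc_pred assms(3) card_gt_0_iff finite_UNIV power_Suc UNIV_not_empty)
    then show ?thesis using fermat_aux[OF False] assms(3) by simp
  qed
  have evq: "even q" using assms(1,2) by simp
  have char2: "(1::'a) + 1 = 0"
  proof -
    have evq0: "even q" using assms(1,2) by simp
    have "even (q ^ 2)" using evq0 by simp
    moreover have "q ^ 2 > 0" using q2 by simp
    ultimately have odd: "odd (q ^ 2 - 1)" by (simp add: even_diff_nat)
    have "(-1::'a) ^ (q ^ 2 - 1) = 1" using fermat_aux[of "-1::'a"] assms(3) by simp
    then have "(-1::'a) = 1" using odd by simp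
    then show ?thesis by (metis add.right_inverse)
  qed
  have xx: "x + x = 0" for x :: 'a
    by (metis char2 distrib_left mult.right_neutral mult_zero_right)
  have two0: "(2::'a) = 0" using char2 by simp
  have frob: "(x + y) ^ q = x ^ q + y ^ q" for x y :: 'a
    using char2_frob[OF char2] assms(2) by simp
  have qq: "(x ^ q) ^ q = x" for x :: 'a
    using ferm by (simp add: power_mult[symmetric] power2_eq_square)
  define T where "T = tr2 q \<delta>"
  have Tq: "T ^ q = T" unfolding T_def tr2_def frob qq by (simp add: add.commute)
  have bT: "b * T ^ 2 = 1" using assms(6) T_def by simp
  have inv: "Pinv (P x) = x" for x
  proof -
    define u where "u = x ^ q + x"
    have uq: "u ^ q = u" unfolding u_def frob qq by (simp add: add.commute)
    define z where "z = u + \<delta>"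
    have Px: "P x = b * z ^ (q + 2) + x" unfolding P_def z_def u_def by simp
    have zq: "z ^ q = u + \<delta> ^ q" unfolding z_def frob uq ..
    have zqq: "z ^ (q + 2) = (u + \<delta>^q) * (u + \<delta>)^2" 
    proof -
      have "z ^ (q + 2) = z ^ q * z ^ 2" by (rule power_add)
      then show ?thesis unfolding zq by (simp add: z_def)
    qed
    define W where "W = (u + \<delta>^q) * (u + \<delta>)^2"
    have PW: "P x = b * W + x" unfolding Px zqq W_def ..
    have "(P x) ^ q = b * W ^ q + x ^ q" unfolding PW frob power_mult_distrib assms(5) ..
    then have t1: "(P x) ^ q + P x = b * W ^ q + b * W + u"
      unfolding PW u_def by (simp add: algebra_simps)
    have Wq: "W ^ q = (u + \<delta>) * (u + \<delta>^q)^2"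
    proof -
      have "W ^ q = (u + \<delta>^q) ^ q * ((u + \<delta>) ^ q) ^ 2"
        unfolding W_def power_mult_distrib power_mult[symmetric] by (simp add: mult.commute)
      also have "(u + \<delta>^q) ^ q = u + \<delta>" unfolding frob uq qq ..
      also have "(u + \<delta>) ^ q = u + \<delta>^q" unfolding frob uq ..
      finally show ?thesis .
    qed
    have tr: "(P x) ^ q + P x = b * ((u + \<delta> ^ q) * (u + \<delta>) * ((u + \<delta>^q) + (u + \<delta>))) + u"
      unfolding t1 Wq unfolding W_def by (simp add: algebra_simps power2_eq_square)
    have key1: "T * ((P x) ^ q + P x) + \<delta> ^ (q + 1) = u ^ 2"
    proof -
      have "T * ((P x) ^ q + P x) + \<delta> ^ (q + 1)
          = b * T^2 * (u*u + u * T + \<delta>^q * \<delta>) + T * u + \<delta>^q * \<delta>"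
      proof -
        have AB: "(u + \<delta>^q) + (u + \<delta>) = T"
        proof -
          have "(u + \<delta>^q) + (u + \<delta>) = (u + u) + (\<delta> + \<delta>^q)" by (simp add: algebra_simps)
          then show ?thesis unfolding xx T_def tr2_def by simp
        qed
        have AB2: "(u + \<delta>^q) * (u + \<delta>) = u*u + u*T + \<delta>^q*\<delta>"
          unfolding T_def tr2_def by (simp add: algebra_simps)
        have d1: "\<delta> ^ (q + 1) = \<delta>^q * \<delta>" by simp
        show ?thesis unfolding tr AB AB2 d1 by (simp add: algebra_simps power2_eq_square)
      qed
      also have "\<dots> = (u * u + \<delta>^q * \<delta> + \<delta>^q * \<delta>) + (u * T + T * u)"
        unfolding bT by (simp add: algebra_simps)
      also have "\<dots> = u ^ 2" by (simp only: add.assoc xx mult.commute[of u T] add_0_right add_0 power2_eq_square)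
      finally show ?thesis .
    qed
    have key2: "(u ^ 2) ^ (q div 2) = u"
    proof -
      have "2 * (q div 2) = q" using assms(1,2)
        using q2 by (simp add: evq)
      then show ?thesis unfolding power_mult[symmetric] by (simp add: uq)
    qed
    have "Pinv (P x) = b * ((u ^ 2) ^ (q div 2) + \<delta>) ^ (q + 2) + P x"
      unfolding Pinv_def T_def[symmetric] key1 ..
    also have "\<dots> = b * z ^ (q + 2) + P x" unfolding key2 z_def ..
    also have "\<dots> = (b * z ^ (q + 2) + b * z ^ (q + 2)) + x" unfolding Px by (rule add.assoc[symmetric])
    also have "\<dots> = x" unfolding xx by (rule add_0)
    finally show ?thesis .
  qed
  have "inj P" by (rule inj_on_inverseI[of _ Pinv]) (rule inv)
  then have bP: "bij P" by (simp add: bij_def finite_UNIV_inj_surj)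
  have PP: "P (Pinv c) = c" for c
  proof -
    have cc: "c = P (inv P c)" using bP by (simp add: bij_is_surj surj_f_inv_f)
    have "P (Pinv (P (inv P c))) = P (inv P c)" unfolding inv ..
    then show ?thesis using cc by simp
  qed
  show ?thesis using bP inv PP by blast
qed

end
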